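(* Let $G$ be a connected graph with $n\geq 6$ vertices that has at least one basis forced vertex. Then $|E(G)|\leq \frac{n(n-1)}{2}-4$. Moreover, if $|E(G)|=\frac{n(n-1)}{2}-4$, then the complement $\overline{G}$ is isomorphic to the disjoint union of the path $P_5$ (on 5 vertices) and $n-5$ isolated vertices, and $G$ has exactly two basis forced vertices.
   Context: All graphs are finite and simple. For vertices $u,v$ of a connected graph $G$, $d(u,v)$ is the length of a shortest $u$–$v$ path. A set $R\subseteq V(G)$ is a resolving set if for all distinct $x,y\in V(G)$ there is $r\in R$ with $d(r,x)\neq d(r,y)$. The metric dimension $\dim(G)$ is the minimum cardinality of a resolving set, and a resolving set of cardinality $\dim(G)$ is a metric basis. A vertex is a basis forced vertex if it belongs to every metric basis of $G$. $\overline{G}$ denotes the complement graph of $G$. *)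

theory Defs
  imports Main
begin

definition simple_graph :: "'a set \<Rightarrow> ('a \<Rightarrow> 'a \<Rightarrow> bool) \<Rightarrow> bool" where
  "simple_graph V E \<longleftrightarrow> finite V \<and> (\<forall>x y. E x y \<longrightarrow> x \<in> V \<and> y \<in> V)
     \<and> (\<forall>x y. E x y \<longrightarrow> E y x) \<and> (\<forall>x. \<not> E x x)"

text \<open>A walk given as its vertex list from u to v; its length is length xs - 1.\<close>
definition is_walk :: "'a set \<Rightarrow> ('a \<Rightarrow> 'a \<Rightarrow> bool) \<Rightarrow> 'a list \<Rightarrow> 'a \<Rightarrow> 'a \<Rightarrow> bool" where
  "is_walk V E xs u v \<longleftrightarrow> xs \<noteq> [] \<and> hd xs = u \<and> last xs = v \<and> set xs \<subseteq> V
     \<and> (\<forall>i. Suc i < length xs \<longrightarrow> E (xs ! i) (xs ! Suc i))"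

definition connected_graph :: "'a set \<Rightarrow> ('a \<Rightarrow> 'a \<Rightarrow> bool) \<Rightarrow> bool" where
  "connected_graph V E \<longleftrightarrow> V \<noteq> {} \<and> (\<forall>u\<in>V. \<forall>v\<in>V. \<exists>xs. is_walk V E xs u v)"

definition dist :: "'a set \<Rightarrow> ('a \<Rightarrow> 'a \<Rightarrow> bool) \<Rightarrow> 'a \<Rightarrow> 'a \<Rightarrow> nat" where
  "dist V E u v = (LEAST k. \<exists>xs. is_walk V E xs u v \<and> length xs = Suc k)"

definition resolving_set :: "'a set \<Rightarrow> ('a \<Rightarrow> 'a \<Rightarrow> bool) \<Rightarrow> 'a set \<Rightarrow> bool" where
  "resolving_set V E R \<longleftrightarrow> R \<subseteq> V \<and>
     (\<forall>x\<in>V. \<forall>y\<in>V. x \<noteq> y \<longrightarrow> (\<exists>r\<in>R. dist V E r x \<noteq> dist V E r y))"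

definition metric_dim :: "'a set \<Rightarrow> ('a \<Rightarrow> 'a \<Rightarrow> bool) \<Rightarrow> nat" where
  "metric_dim V E = (LEAST k. \<exists>R. resolving_set V E R \<and> card R = k)"

definition metric_basis :: "'a set \<Rightarrow> ('a \<Rightarrow> 'a \<Rightarrow> bool) \<Rightarrow> 'a set \<Rightarrow> bool" where
  "metric_basis V E R \<longleftrightarrow> resolving_set V E R \<and> card R = metric_dim V E"

definition basis_forced :: "'a set \<Rightarrow> ('a \<Rightarrow> 'a \<Rightarrow> bool) \<Rightarrow> 'a \<Rightarrow> bool" where
  "basis_forced V E v \<longleftrightarrow> v \<in> V \<and> (\<forall>R. metric_basis V E R \<longrightarrow> v \<in> R)"

definition edge_set :: "('a \<Rightarrow> 'a \<Rightarrow> bool) \<Rightarrow> 'a set set" where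
  "edge_set E = {{u, v} | u v. E u v}"

definition compl_graph :: "'a set \<Rightarrow> ('a \<Rightarrow> 'a \<Rightarrow> bool) \<Rightarrow> 'a \<Rightarrow> 'a \<Rightarrow> bool" where
  "compl_graph V E u v \<longleftrightarrow> u \<in> V \<and> v \<in> V \<and> u \<noteq> v \<and> \<not> E u v"

definition graph_iso :: "'a set \<Rightarrow> ('a \<Rightarrow> 'a \<Rightarrow> bool) \<Rightarrow> 'b set \<Rightarrow> ('b \<Rightarrow> 'b \<Rightarrow> bool) \<Rightarrow> bool" where
  "graph_iso V E W F \<longleftrightarrow> (\<exists>f. bij_betw f V W \<and> (\<forall>u\<in>V. \<forall>v\<in>V. E u v \<longleftrightarrow> F (f u) (f v)))"

text \<open>P_5 on vertices 0,...,4 together with isolated vertices 5,...,n-1.\<close>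
definition P5_plus_isolated :: "nat \<Rightarrow> nat \<Rightarrow> bool" where
  "P5_plus_isolated i j \<longleftrightarrow> (j = Suc i \<and> i < 4) \<or> (i = Suc j \<and> j < 4)"

end

theory Submission
  imports Defs
begin

definition sep :: "('a \<Rightarrow> 'a \<Rightarrow> bool) \<Rightarrow> 'a set \<Rightarrow> 'a \<Rightarrow> 'a \<Rightarrow> bool" where
  "sep H R x y \<longleftrightarrow> (\<exists>r\<in>R. r = x \<or> r = y \<or> H r x \<noteq> H r y)"

definition wit :: "'a set \<Rightarrow> ('a \<Rightarrow> 'a \<Rightarrow> bool) \<Rightarrow> 'a set \<Rightarrow> 'a \<Rightarrow> 'a \<Rightarrow> 'a \<Rightarrow> bool" where
  "wit V H R v x y \<longleftrightarrow> x \<in> V \<and> y \<in> V \<and> x \<noteq> y \<and> (\<forall>r\<in>R-{v}. r \<noteq> x \<and> r \<noteq> y \<and> H r x = H r y)"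

definition P5v :: "('a \<Rightarrow> 'a \<Rightarrow> bool) \<Rightarrow> 'a \<Rightarrow> bool" where
  "P5v H v \<longleftrightarrow> (\<exists>a c d e. distinct [a,v,c,d,e] \<and> H a v \<and> H v c \<and> H c d \<and> H d e)"

locale conf =
  fixes V :: "'a set" and H :: "'a \<Rightarrow> 'a \<Rightarrow> bool" and R :: "'a set" and v :: 'a
  assumes finV: "finite V"
    and Hsym: "\<And>x y. H x y \<Longrightarrow> H y x"
    and HV: "\<And>x y. H x y \<Longrightarrow> x \<in> V"
    and m4: "card (edge_set H) \<le> 4"
    and RV: "R \<subseteq> V" and vR: "v \<in> R"
    and resR: "\<And>x y. x \<in> V \<Longrightarrow> y \<in> V \<Longrightarrow> x \<noteq> y \<Longrightarrow> sep H R x y"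
    and Mex: "\<exists>x y. wit V H R v x y"
    and Swap: "\<And>u. u \<in> V \<Longrightarrow> u \<notin> R \<Longrightarrow> \<exists>x y. wit V H R v x y \<and> x \<noteq> u \<and> y \<noteq> u \<and> H u x = H u y"
begin

definition Bv where "Bv b \<longleftrightarrow> b \<in> V \<and> b \<notin> R \<and> (\<forall>r\<in>R-{v}. H r v = H r b)"
definition Ap where "Ap p q \<longleftrightarrow> p \<in> V \<and> q \<in> V \<and> p \<notin> R \<and> q \<notin> R \<and> p \<noteq> q \<and>
   (\<forall>r\<in>R-{v}. H r p = H r q) \<and> H v p \<and> \<not> H v q"

lemma finE: "finite (edge_set H)"
proof -
  have "edge_set H \<subseteq> Pow V" unfolding edge_set_def using HV Hsym by blast
  thus ?thesis using finV by (meson finite_Pow_iff finite_subset)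
qed

lemma inj: assumes "x \<in> V" "y \<in> V" "x \<notin> R" "y \<notin> R" "x \<noteq> y"
  shows "\<exists>r\<in>R. H r x \<noteq> H r y"
  using resR[OF assms(1,2,5)] assms(3,4) unfolding sep_def by blast

lemma edge5:
  assumes "H a1 b1" "H a2 b2" "H a3 b3" "H a4 b4" "H a5 b5"
    and "card {{a1,b1},{a2,b2},{a3,b3},{a4,b4},{a5,b5}} = 5"
  shows False
proof -
  have "{{a1,b1},{a2,b2},{a3,b3},{a4,b4},{a5,b5}} \<subseteq> edge_set H"
    using assms unfolding edge_set_def by blast
  hence "5 \<le> card (edge_set H)" using card_mono[OF finE] assms(6) by metis
  thus False using m4 by simp
qed

lemma exact4:
  assumes "H a1 b1" "H a2 b2" "H a3 b3" "H a4 b4"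
    and "card {{a1,b1},{a2,b2},{a3,b3},{a4,b4}} = 4" and "H p q"
  shows "{p,q} \<in> {{a1,b1},{a2,b2},{a3,b3},{a4,b4}}"
proof -
  have s: "{{a1,b1},{a2,b2},{a3,b3},{a4,b4}} \<subseteq> edge_set H"
    using assms unfolding edge_set_def by blast
  have "card (edge_set H) \<le> card {{a1,b1},{a2,b2},{a3,b3},{a4,b4}}" using m4 assms(5) by simp
  hence "{{a1,b1},{a2,b2},{a3,b3},{a4,b4}} = edge_set H" using card_seteq[OF finE s] by blast
  moreover have "{p,q} \<in> edge_set H" using assms(6) unfolding edge_set_def by blast
  ultimately show ?thesis by simp
qed

lemma wit_cases:
  assumes "wit V H R v x y"
  shows "(x = v \<and> Bv y) \<or> (y = v \<and> Bv x) \<or> Ap x y \<or> Ap y x"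
proof -
  have xy: "x \<in> V" "y \<in> V" "x \<noteq> y" and agree: "\<forall>r\<in>R-{v}. r \<noteq> x \<and> r \<noteq> y \<and> H r x = H r y"
    using assms unfolding wit_def by auto
  show ?thesis
  proof (cases "x = v")
    case True
    then show ?thesis using xy agree Hsym unfolding Bv_def by auto
  next
    case xv: False
    show ?thesis
    proof (cases "y = v")
      case True
      then show ?thesis using xy agree Hsym unfolding Bv_def by auto
    next
      case yv: False
      have "x \<notin> R" "y \<notin> R" using agree xv yv by auto
      obtain r where r: "r \<in> R" "r = x \<or> r = y \<or> H r x \<noteq> H r y"
        using resR[OF xy] unfolding sep_def by blast
      have "r = v" using r agree `x \<notin> R` `y \<notin> R` by auto
      hence "H v x \<noteq> H v y" using r `x \<notin> R` `y \<notin> R` by auto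
      then show ?thesis using xy agree `x \<notin> R` `y \<notin> R` unfolding Ap_def by auto
    qed
  qed
qed

lemma M': "(\<exists>b. Bv b) \<or> (\<exists>p q. Ap p q)"
  using Mex wit_cases by blast

lemma S': assumes "u \<in> V" "u \<notin> R"
  shows "(\<exists>b. Bv b \<and> b \<noteq> u \<and> H u v = H u b) \<or> (\<exists>p q. Ap p q \<and> p \<noteq> u \<and> q \<noteq> u \<and> H u p = H u q)"
  using Swap[OF assms] wit_cases by metis

lemma core_alpha:
  assumes "Ap x1 y1" "Ap x2 y2" "x1 \<noteq> x2" "x1 \<noteq> y2" "y1 \<noteq> x2" "y1 \<noteq> y2"
  shows "P5v H v"
proof -
  have a: "x1 \<in> V" "y1 \<in> V" "x1 \<notin> R" "y1 \<notin> R" "H v x1" "\<not> H v y1" "\<forall>r\<in>R-{v}. H r x1 = H r y1"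
    and b: "x2 \<in> V" "y2 \<in> V" "x2 \<notin> R" "y2 \<notin> R" "H v x2" "\<not> H v y2" "\<forall>r\<in>R-{v}. H r x2 = H r y2"
    using assms(1,2) unfolding Ap_def by auto
  have "x1 \<noteq> y1" "x2 \<noteq> y2" using assms(1,2) unfolding Ap_def by auto
  obtain r where r: "r \<in> R" "H r y1 \<noteq> H r y2" using inj[of y1 y2] a b assms by blast
  have rv: "r \<noteq> v" using r a b by auto
  have "v \<noteq> x1" "v \<noteq> x2" "v \<noteq> y1" "v \<noteq> y2" "r \<noteq> x1" "r \<noteq> x2" "r \<noteq> y1" "r \<noteq> y2"
    using a b vR r by auto
  show ?thesis
  proof (cases "H r y2")
    case True
    hence "H r x2" using b r rv by auto
    thus ?thesis unfolding P5v_def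
      apply (rule_tac x=x1 in exI, rule_tac x=x2 in exI, rule_tac x=r in exI, rule_tac x=y2 in exI)
      using True a b assms Hsym rv `x2 \<noteq> y2` `x1 \<noteq> y1` `v \<noteq> x1` `v \<noteq> x2` `v \<noteq> y2` `r \<noteq> x1` `r \<noteq> x2` `r \<noteq> y2` by auto
  next
    case False
    hence "H r y1" "H r x1" using a r rv by auto
    thus ?thesis unfolding P5v_def
      apply (rule_tac x=x2 in exI, rule_tac x=x1 in exI, rule_tac x=r in exI, rule_tac x=y1 in exI)
      using a b assms Hsym rv `x2 \<noteq> y2` `x1 \<noteq> y1` `v \<noteq> x1` `v \<noteq> x2` `v \<noteq> y1` `r \<noteq> x1` `r \<noteq> x2` `r \<noteq> y1` by auto
  qed
qed

lemma core_beta: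
  assumes "Ap x y" "Bv w" "w \<noteq> x" "w \<noteq> y"
  shows "P5v H v"
proof -
  have a: "x \<in> V" "y \<in> V" "x \<notin> R" "y \<notin> R" "H v x" "\<not> H v y" "\<forall>r\<in>R-{v}. H r x = H r y" "x \<noteq> y"
    using assms(1) unfolding Ap_def by auto
  have b: "w \<in> V" "w \<notin> R" "\<forall>r\<in>R-{v}. H r v = H r w"
    using assms(2) unfolding Bv_def by auto
  have vs: "v \<noteq> x" "v \<noteq> y" "v \<noteq> w" using a b vR by auto
  have Hxv: "H x v" using a Hsym by auto
  show ?thesis
  proof (cases "\<exists>r\<in>R-{v}. H r y")
    case True
    then obtain r where r: "r \<in> R" "r \<noteq> v" "H r y" by auto
    have rx: "H r x" using r a by auto
    have rd: "r \<noteq> x" "r \<noteq> y" "r \<noteq> w" using r a b by auto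
    show ?thesis
    proof (cases "\<exists>s\<in>R-{v}. H s v")
      case True
      then obtain s where s: "s \<in> R" "s \<noteq> v" "H s v" by auto
      have sw: "H s w" using s b by auto
      have sd: "s \<noteq> x" "s \<noteq> y" "s \<noteq> w" using s a b by auto
      have "card {{v,x},{r,x},{r,y},{v,s},{s,w}} = 5"
        using vs rd sd r(2) s(2) a(8) assms(3,4) by (auto simp add: doubleton_eq_iff card_insert_if)
      then show ?thesis using edge5[of v x r x r y v s s w] a(5) rx r(3) s(3) sw Hsym by blast
    next
      case False
      hence nR: "\<forall>s\<in>R-{v}. \<not> H s v" by auto
      show ?thesis
      proof (cases "H v w")
        case True
        then show ?thesis unfolding P5v_def
          apply (rule_tac x=w in exI, rule_tac x=x in exI, rule_tac x=r in exI, rule_tac x=y in exI)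
          using a vs rd r assms Hsym rx by auto
      next
        case False
        have cw: "\<forall>s\<in>R. \<not> H s w" using False nR b by auto
        have "(\<exists>b. Bv b \<and> b \<noteq> x \<and> H x v = H x b) \<or> (\<exists>p q. Ap p q \<and> p \<noteq> x \<and> q \<noteq> x \<and> H x p = H x q)"
          using S'[of x] a by auto
        then show ?thesis
        proof
          assume "\<exists>b. Bv b \<and> b \<noteq> x \<and> H x v = H x b"
          then obtain bb where bb: "Bv bb" "bb \<noteq> x" "H x bb" using Hxv by auto
          have bb2: "bb \<in> V" "bb \<notin> R" "\<forall>r\<in>R-{v}. H r v = H r bb" using bb(1) unfolding Bv_def by auto
          show ?thesis
          proof (cases "bb = w")
            case False
            obtain r' where r': "r' \<in> R" "H r' bb \<noteq> H r' w" using inj[of bb w] bb2 b False by auto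
            have "r' = v" using r' cw bb2 nR by auto
            hence vb: "H v bb" using r' cw by auto
            have "bb \<noteq> y" using vb a by auto
            have "bb \<noteq> v" "bb \<noteq> r" using bb2 r vR by auto
            have "card {{v,x},{r,x},{r,y},{v,bb},{x,bb}} = 5"
              using vs rd r(2) a(8) assms(3,4) bb(2) `bb \<noteq> y` `bb \<noteq> v` `bb \<noteq> r` False
              by (auto simp add: doubleton_eq_iff card_insert_if)
            then show ?thesis using edge5[of v x r x r y v bb x bb] a(5) rx r(3) vb bb(3) by blast
          next
            case True
            hence xw: "H x w" using bb by simp
            have c4: "card {{v,x},{r,x},{r,y},{x,w}} = 4"
              using vs rd r(2) a(8) assms(3,4) by (auto simp add: doubleton_eq_iff card_insert_if)
            have ex: "\<And>p q. H p q \<Longrightarrow> {p,q} \<in> {{v,x},{r,x},{r,y},{x,w}}"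
              using exact4[OF a(5) rx r(3) xw c4] by blast
            have nwv: "\<not> H w v"
            proof
              assume "H w v" show False using ex[OF `H w v`] vs rd assms(3,4) by (auto simp add: doubleton_eq_iff)
            qed
            have "(\<exists>b. Bv b \<and> b \<noteq> w \<and> H w v = H w b) \<or> (\<exists>p q. Ap p q \<and> p \<noteq> w \<and> q \<noteq> w \<and> H w p = H w q)"
              using S'[of w] b by auto
            then show ?thesis
            proof
              assume "\<exists>b. Bv b \<and> b \<noteq> w \<and> H w v = H w b"
              then obtain b' where b': "Bv b'" "b' \<noteq> w" "\<not> H w b'" using nwv by auto
              have b'2: "b' \<in> V" "b' \<notin> R" "\<forall>r\<in>R-{v}. \<not> H r b'" using b'(1) nR unfolding Bv_def by auto
              have "\<not> H v b'"
              proof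
                assume "H v b'"
                hence "b' = x" using ex[OF `H v b'`] b'2 vR r vs by (auto simp add: doubleton_eq_iff)
                thus False using b'(3) Hsym[OF xw] by auto
              qed
              then show ?thesis using inj[of b' w] b'2 b b'(2) cw by auto
            next
              assume "\<exists>p q. Ap p q \<and> p \<noteq> w \<and> q \<noteq> w \<and> H w p = H w q"
              then obtain p q where pq: "Ap p q" "p \<noteq> w" "q \<noteq> w" "H w p = H w q" by auto
              have pq2: "p \<notin> R" "q \<notin> R" "H v p" "p \<noteq> q" using pq(1) unfolding Ap_def by auto
              have "{v,p} \<in> {{v,x},{r,x},{r,y},{x,w}}" by (rule ex[OF pq2(3)])
              hence "p = x" using vs r(2) by (simp add: doubleton_eq_iff)
              hence "H w q" using pq Hsym[OF xw] `p = x` by auto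
              hence "q = x" using ex[OF `H w q`] vs rd assms(3,4) by (auto simp add: doubleton_eq_iff)
              then show ?thesis using `p = x` pq2 by simp
            qed
          qed
        next
          assume "\<exists>p q. Ap p q \<and> p \<noteq> x \<and> q \<noteq> x \<and> H x p = H x q"
          then obtain p q where pq: "Ap p q" "p \<noteq> x" by auto
          have pq2: "p \<notin> R" "H v p" using pq(1) unfolding Ap_def by auto
          have "p \<noteq> y" "p \<noteq> w" "p \<noteq> v" "p \<noteq> r" using pq2 a False vR r by auto
          then show ?thesis unfolding P5v_def
            apply (rule_tac x=p in exI, rule_tac x=x in exI, rule_tac x=r in exI, rule_tac x=y in exI)
            using a vs rd r pq pq2 Hsym rx by auto
        qed
      qed
    qed
  next
    case False
    hence cy: "\<forall>r\<in>R-{v}. \<not> H r y" by auto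
    hence cx: "\<forall>r\<in>R-{v}. \<not> H r x" using a by auto
    obtain s where s: "s \<in> R" "s \<noteq> v" "H s w"
    proof -
      obtain r1 where r1: "r1 \<in> R" "H r1 w \<noteq> H r1 y" using inj[of w y] a b assms(4) by auto
      obtain r2 where r2: "r2 \<in> R" "H r2 w \<noteq> H r2 x" using inj[of w x] a b assms(3) by auto
      show ?thesis
      proof (cases "r1 = v")
        case True
        hence "H v w" using r1 a by auto
        hence "r2 \<noteq> v" using r2 a by auto
        thus ?thesis using that r2 cx by auto
      next
        case False
        thus ?thesis using that r1 cy by auto
      qed
    qed
    have sv: "H s v" "H v s" using s b Hsym by auto
    have sd: "s \<noteq> x" "s \<noteq> y" "s \<noteq> w" using s a b by auto
    have "(\<exists>b. Bv b \<and> b \<noteq> x \<and> H x v = H x b) \<or> (\<exists>p q. Ap p q \<and> p \<noteq> x \<and> q \<noteq> x \<and> H x p = H x q)"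
      using S'[of x] a by auto
    then show ?thesis
    proof
      assume "\<exists>b. Bv b \<and> b \<noteq> x \<and> H x v = H x b"
      then obtain bb where bb: "Bv bb" "bb \<noteq> x" "H x bb" using Hxv by auto
      have bb2: "bb \<in> V" "bb \<notin> R" "H s bb" using bb(1) s sv unfolding Bv_def by auto
      show ?thesis
      proof (cases "bb = w")
        case False
        have "bb \<noteq> v" "bb \<noteq> s" using bb2 s vR by auto
        have "card {{x,v},{v,s},{s,w},{s,bb},{x,bb}} = 5"
          using vs sd s(2) a(8) assms(3,4) bb(2) `bb \<noteq> v` `bb \<noteq> s` False
          by (auto simp add: doubleton_eq_iff card_insert_if)
        then show ?thesis using edge5[of x v v s s w s bb x bb] Hxv sv s(3) bb2(3) bb(3) by blast
      next
        case True
        hence xw: "H x w" using bb by simp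
        have c4: "card {{x,v},{v,s},{s,w},{x,w}} = 4"
          using vs sd s(2) a(8) assms(3,4) by (auto simp add: doubleton_eq_iff card_insert_if)
        have ex: "\<And>p q. H p q \<Longrightarrow> {p,q} \<in> {{x,v},{v,s},{s,w},{x,w}}"
          using exact4[OF Hxv sv(2) s(3) xw c4] by blast
        have nwv: "\<not> H w v"
        proof
          assume "H w v" show False using ex[OF `H w v`] vs sd s assms(3,4) by (auto simp add: doubleton_eq_iff)
        qed
        have "(\<exists>b. Bv b \<and> b \<noteq> w \<and> H w v = H w b) \<or> (\<exists>p q. Ap p q \<and> p \<noteq> w \<and> q \<noteq> w \<and> H w p = H w q)"
          using S'[of w] b by auto
        then show ?thesis
        proof
          assume "\<exists>b. Bv b \<and> b \<noteq> w \<and> H w v = H w b"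
          then obtain b' where b': "Bv b'" "b' \<noteq> w" by auto
          have b'2: "b' \<notin> R" "H s b'" using b'(1) s sv unfolding Bv_def by auto
          have "b' = v \<or> b' = w" using ex[OF b'2(2)] b'2 s vs sd by (auto simp add: doubleton_eq_iff)
          then show ?thesis using b' b'2 vR by auto
        next
          assume "\<exists>p q. Ap p q \<and> p \<noteq> w \<and> q \<noteq> w \<and> H w p = H w q"
          then obtain p q where pq: "Ap p q" "p \<noteq> w" "q \<noteq> w" "H w p = H w q" by auto
          have pq2: "p \<notin> R" "q \<notin> R" "H v p" "p \<noteq> q" using pq(1) unfolding Ap_def by auto
          have "p = x" using ex[OF pq2(3)] vs s(2) s(1) pq2(1) by (auto simp add: doubleton_eq_iff)
          hence "H w q" using pq Hsym[OF xw] `p = x` by auto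
          hence "q = x" using ex[OF `H w q`] assms(3) vs sd pq(3) pq2(2) s(1) by (auto simp add: doubleton_eq_iff)
          then show ?thesis using `p = x` pq2 by simp
        qed
      qed
    next
      assume "\<exists>p q. Ap p q \<and> p \<noteq> x \<and> q \<noteq> x \<and> H x p = H x q"
      then obtain p q where pq: "Ap p q" "p \<noteq> x" "q \<noteq> x" by auto
      have pq2: "p \<in> V" "p \<notin> R" "q \<notin> R" "H v p" "p \<noteq> q" "\<forall>r\<in>R-{v}. H r p = H r q"
        using pq(1) unfolding Ap_def by auto
      have "p \<noteq> y" using pq2 a by auto
      have pvs: "p \<noteq> v" "p \<noteq> s" using pq2(2) vR s(1) by auto
      show ?thesis
      proof (cases "p = w")
        case True
        have c4: "card {{x,v},{v,s},{s,w},{v,w}} = 4"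
          using vs sd s(2) assms(3) by (auto simp add: doubleton_eq_iff card_insert_if)
        have "H v w" using pq2(4) True by simp
        have ex: "\<And>p q. H p q \<Longrightarrow> {p,q} \<in> {{x,v},{v,s},{s,w},{v,w}}"
          using exact4[OF Hxv sv(2) s(3) `H v w` c4] by blast
        have "H s q" using pq2(6) s(1,2,3) True by auto
        hence "q = v \<or> q = w" using ex[OF `H s q`] s(2) sd by (auto simp add: doubleton_eq_iff)
        then show ?thesis using pq2(3,5) True vR by auto
      next
        case False
        have c4: "card {{x,v},{v,s},{s,w},{v,p}} = 4"
          using vs sd s(2) assms(3) pq(2) False pvs by (auto simp add: doubleton_eq_iff card_insert_if)
        have ex: "\<And>p' q'. H p' q' \<Longrightarrow> {p',q'} \<in> {{x,v},{v,s},{s,w},{v,p}}"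
          using exact4[OF Hxv sv(2) s(3) pq2(4) c4] by blast
        have "x \<noteq> p" using pq(2) by simp
        obtain r' where r': "r' \<in> R" "H r' x \<noteq> H r' p" using inj[OF a(1) pq2(1) a(3) pq2(2) `x \<noteq> p`] by blast
        have "r' \<noteq> v" using r'(2) a(5) pq2(4) by auto
        hence "H r' p" using r' cx by auto
        hence "{r',p} \<in> {{x,v},{v,s},{s,w},{v,p}}" using ex by blast
        moreover have "r' \<noteq> x" using r'(1) a(3) by auto
        ultimately show ?thesis using `r' \<noteq> v` pvs False pq(2) by (auto simp add: doubleton_eq_iff)
      qed
    qed
  qed
qed

lemma core_gamma_or:
  assumes "Bv w1" "Bv w2" "w1 \<noteq> w2" "H v w1" "\<not> H v w2"
  shows "P5v H v"
proof -
  have b1: "w1 \<in> V" "w1 \<notin> R" "\<forall>r\<in>R-{v}. H r v = H r w1" using assms(1) unfolding Bv_def by auto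
  have b2: "w2 \<in> V" "w2 \<notin> R" "\<forall>r\<in>R-{v}. H r v = H r w2" using assms(2) unfolding Bv_def by auto
  have vw: "v \<noteq> w1" "v \<noteq> w2" using b1 b2 vR by auto
  have w1v: "H w1 v" using Hsym[OF assms(4)] .
  show ?thesis
  proof (cases "\<exists>s\<in>R-{v}. H s v")
    case True
    then obtain s where s: "s \<in> R" "s \<noteq> v" "H s v" by auto
    have sw: "H s w1" "H s w2" using s b1 b2 by auto
    have sd: "s \<noteq> w1" "s \<noteq> w2" using s b1 b2 by auto
    have c4: "card {{v,w1},{v,s},{s,w1},{s,w2}} = 4"
      using vw sd s(2) assms(3) by (auto simp add: doubleton_eq_iff card_insert_if)
    have ex: "\<And>p q. H p q \<Longrightarrow> {p,q} \<in> {{v,w1},{v,s},{s,w1},{s,w2}}"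
      using exact4[OF assms(4) Hsym[OF s(3)] sw c4] by blast
    have "(\<exists>b. Bv b \<and> b \<noteq> w1 \<and> H w1 v = H w1 b) \<or> (\<exists>p q. Ap p q \<and> p \<noteq> w1 \<and> q \<noteq> w1 \<and> H w1 p = H w1 q)"
      using S'[of w1] b1 by auto
    then show ?thesis
    proof
      assume "\<exists>b. Bv b \<and> b \<noteq> w1 \<and> H w1 v = H w1 b"
      then obtain b where b: "Bv b" "b \<noteq> w1" "H w1 b" using w1v by auto
      have "b \<notin> R" using b(1) unfolding Bv_def by auto
      have "{w1,b} \<in> {{v,w1},{v,s},{s,w1},{s,w2}}" using ex[OF b(3)] .
      hence "b = v \<or> b = s" using vw sd assms(3) b(2) by (auto simp add: doubleton_eq_iff)
      then show ?thesis using `b \<notin> R` vR s(1) by auto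
    next
      assume "\<exists>p q. Ap p q \<and> p \<noteq> w1 \<and> q \<noteq> w1 \<and> H w1 p = H w1 q"
      then obtain p q where pq: "Ap p q" "p \<noteq> w1" by auto
      have p: "p \<notin> R" "H v p" using pq(1) unfolding Ap_def by auto
      have "{v,p} \<in> {{v,w1},{v,s},{s,w1},{s,w2}}" using ex[OF p(2)] .
      hence "p = w1 \<or> p = s" using vw sd s(2) by (auto simp add: doubleton_eq_iff)
      then show ?thesis using pq(2) p(1) s(1) by auto
    qed
  next
    case False
    hence nR: "\<forall>s\<in>R-{v}. \<not> H s v" by auto
    have c1: "\<forall>s\<in>R-{v}. \<not> H s w1" and c2: "\<forall>s\<in>R-{v}. \<not> H s w2" using nR b1 b2 by auto
    have "(\<exists>b. Bv b \<and> b \<noteq> w1 \<and> H w1 v = H w1 b) \<or> (\<exists>p q. Ap p q \<and> p \<noteq> w1 \<and> q \<noteq> w1 \<and> H w1 p = H w1 q)"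
      using S'[of w1] b1 by auto
    then show ?thesis
    proof
      assume "\<exists>b. Bv b \<and> b \<noteq> w1 \<and> H w1 v = H w1 b"
      then obtain b where b: "Bv b" "b \<noteq> w1" "H w1 b" using w1v by auto
      have bb: "b \<in> V" "b \<notin> R" "\<forall>s\<in>R-{v}. \<not> H s b" using b(1) nR unfolding Bv_def by auto
      show ?thesis
      proof (cases "b = w2")
        case False
        obtain r where r: "r \<in> R" "H r b \<noteq> H r w2" using inj[OF bb(1) b2(1) bb(2) b2(2) False] by blast
        have "r = v" using r bb(3) c2 by auto
        hence vb: "H v b" using r assms(5) by auto
        obtain r' where r': "r' \<in> R" "H r' b \<noteq> H r' w1" using inj[OF bb(1) b1(1) bb(2) b1(2) b(2)] by blast
        show ?thesis using r' vb assms(4) bb(3) c1 by (cases "r' = v") auto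
      next
        case True
        hence w12: "H w1 w2" using b(3) by simp
        have "\<not> H w2 v" using assms(5) Hsym by blast
        have "(\<exists>b. Bv b \<and> b \<noteq> w2 \<and> H w2 v = H w2 b) \<or> (\<exists>p q. Ap p q \<and> p \<noteq> w2 \<and> q \<noteq> w2 \<and> H w2 p = H w2 q)"
          using S'[of w2] b2 by auto
        then show ?thesis
        proof
          assume "\<exists>b. Bv b \<and> b \<noteq> w2 \<and> H w2 v = H w2 b"
          then obtain b' where b': "Bv b'" "b' \<noteq> w2" "\<not> H w2 b'" using `\<not> H w2 v` by auto
          have bb': "b' \<in> V" "b' \<notin> R" "\<forall>s\<in>R-{v}. \<not> H s b'" using b'(1) nR unfolding Bv_def by auto
          show ?thesis
          proof (cases "H v b'")
            case True
            have "b' \<noteq> w1" using b'(3) Hsym[OF w12] by auto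
            obtain r' where r': "r' \<in> R" "H r' b' \<noteq> H r' w1" using inj[OF bb'(1) b1(1) bb'(2) b1(2) `b' \<noteq> w1`] by blast
            show ?thesis using r' True assms(4) bb'(3) c1 by (cases "r' = v") auto
          next
            case False
            obtain r' where r': "r' \<in> R" "H r' b' \<noteq> H r' w2" using inj[OF bb'(1) b2(1) bb'(2) b2(2) b'(2)] by blast
            show ?thesis using r' False assms(5) bb'(3) c2 by (cases "r' = v") auto
          qed
        next
          assume "\<exists>p q. Ap p q \<and> p \<noteq> w2 \<and> q \<noteq> w2 \<and> H w2 p = H w2 q"
          then obtain p q where pq: "Ap p q" "p \<noteq> w2" "q \<noteq> w2" "H w2 p = H w2 q" by auto
          have pq2: "p \<in> V" "q \<in> V" "p \<notin> R" "q \<notin> R" "p \<noteq> q" "\<forall>r\<in>R-{v}. H r p = H r q" "H v p" "\<not> H v q"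
            using pq(1) unfolding Ap_def by auto
          show ?thesis
          proof (cases "p = w1")
            case True
            have cq: "\<forall>r\<in>R-{v}. \<not> H r q" using pq2(6) c1 True by auto
            obtain r' where r': "r' \<in> R" "H r' q \<noteq> H r' w2" using inj[OF pq2(2) b2(1) pq2(4) b2(2) pq(3)] by blast
            show ?thesis using r' pq2(8) assms(5) cq c2 by (cases "r' = v") auto
          next
            case False
            obtain r where r: "r \<in> R" "H r p \<noteq> H r w1" using inj[OF pq2(1) b1(1) pq2(3) b1(2) False] by blast
            have rv: "r \<noteq> v" using r pq2(7) assms(4) by auto
            have rp: "H r p" using r rv c1 by auto
            have rq: "H r q" using rp pq2(6) r(1) rv by auto
            have "q \<noteq> w1" using rq c1 r(1) rv by auto
            have rd: "r \<noteq> w1" "r \<noteq> w2" "r \<noteq> p" "r \<noteq> q" using r(1) b1(2) b2(2) pq2(3,4) by auto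
            have vd: "v \<noteq> p" "v \<noteq> q" using vR pq2(3,4) by auto
            have "card {{v,w1},{w1,w2},{v,p},{r,p},{r,q}} = 5"
              using vw rd vd rv False pq(2,3) `q \<noteq> w1` pq2(5) assms(3)
              by (auto simp add: doubleton_eq_iff card_insert_if)
            then show ?thesis using edge5[OF assms(4) w12 pq2(7) rp rq] by blast
          qed
        qed
      qed
    next
      assume "\<exists>p q. Ap p q \<and> p \<noteq> w1 \<and> q \<noteq> w1 \<and> H w1 p = H w1 q"
      then obtain p q where pq: "Ap p q" "p \<noteq> w1" "q \<noteq> w1" by auto
      have pq2: "p \<in> V" "q \<in> V" "p \<notin> R" "q \<notin> R" "p \<noteq> q" "\<forall>r\<in>R-{v}. H r p = H r q" "H v p" "\<not> H v q"
        using pq(1) unfolding Ap_def by auto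
      obtain r where r: "r \<in> R" "H r p \<noteq> H r w1" using inj[OF pq2(1) b1(1) pq2(3) b1(2) pq(2)] by blast
      have rv: "r \<noteq> v" using r pq2(7) assms(4) by auto
      have rp: "H r p" using r rv c1 by auto
      have rq: "H r q" using rp pq2(6) r(1) rv by auto
      have rd: "r \<noteq> w1" "r \<noteq> p" "r \<noteq> q" using r(1) b1(2) pq2(3,4) by auto
      have vd: "v \<noteq> p" "v \<noteq> q" using vR pq2(3,4) by auto
      show ?thesis unfolding P5v_def
        apply (rule_tac x=w1 in exI, rule_tac x=p in exI, rule_tac x=r in exI, rule_tac x=q in exI)
        using w1v pq2(7) Hsym[OF rp] rq vw rd vd rv pq(2,3) pq2(5) by auto
    qed
  qed
qed

lemma core_gamma:
  assumes "Bv w1" "Bv w2" "w1 \<noteq> w2"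
  shows "P5v H v"
proof -
  have b1: "w1 \<in> V" "w1 \<notin> R" "\<forall>r\<in>R-{v}. H r v = H r w1" using assms(1) unfolding Bv_def by auto
  have b2: "w2 \<in> V" "w2 \<notin> R" "\<forall>r\<in>R-{v}. H r v = H r w2" using assms(2) unfolding Bv_def by auto
  obtain r where r: "r \<in> R" "H r w1 \<noteq> H r w2" using inj[OF b1(1) b2(1) b1(2) b2(2) assms(3)] by blast
  have "r = v" using r b1(3) b2(3) by auto
  hence "H v w1 \<noteq> H v w2" using r by simp
  thus ?thesis using core_gamma_or[OF assms] core_gamma_or[OF assms(2,1) assms(3)[symmetric]] by auto
qed

lemma main_local: "P5v H v"
proof -
  have Ap_d: "\<And>p q. Ap p q \<Longrightarrow> p \<in> V \<and> p \<notin> R \<and> p \<noteq> q \<and> H v p \<and> \<not> H v q" unfolding Ap_def by auto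
  have Bv_d: "\<And>b. Bv b \<Longrightarrow> b \<in> V \<and> b \<notin> R" unfolding Bv_def by auto
  from M' show ?thesis
  proof
    assume "\<exists>b. Bv b"
    then obtain w where w: "Bv w" by auto
    have wd: "w \<in> V" "w \<notin> R" using Bv_d[OF w] by auto
    from S'[OF wd] show ?thesis
    proof
      assume "\<exists>b. Bv b \<and> b \<noteq> w \<and> H w v = H w b"
      then obtain b where "Bv b" "b \<noteq> w" by auto
      then show ?thesis using core_gamma[OF w] by auto
    next
      assume "\<exists>p q. Ap p q \<and> p \<noteq> w \<and> q \<noteq> w \<and> H w p = H w q"
      then obtain p q where "Ap p q" "p \<noteq> w" "q \<noteq> w" by auto
      then show ?thesis using core_beta[OF _ w] by auto
    qed
  next
    assume "\<exists>p q. Ap p q"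
    then obtain x y where xy: "Ap x y" by auto
    note xyd = Ap_d[OF xy]
    have yd: "y \<in> V" "y \<notin> R" using xy unfolding Ap_def by auto
    have xd: "x \<in> V" "x \<notin> R" using xyd by auto
    from S'[OF xd] show ?thesis
    proof
      assume "\<exists>b. Bv b \<and> b \<noteq> x \<and> H x v = H x b"
      then obtain b where b: "Bv b" "b \<noteq> x" by auto
      show ?thesis
      proof (cases "b = y")
        case False
        then show ?thesis using core_beta[OF xy b(1)] b(2) by auto
      next
        case True
        from S'[OF yd] show ?thesis
        proof
          assume "\<exists>b. Bv b \<and> b \<noteq> y \<and> H y v = H y b"
          then obtain b' where b': "Bv b'" "b' \<noteq> y" by auto
          show ?thesis
          proof (cases "b' = x")
            case True
            then show ?thesis using core_gamma[OF b(1) b'(1)] b' `b = y` by auto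
          next
            case False
            then show ?thesis using core_beta[OF xy b'(1)] b'(2) by auto
          qed
        next
          assume "\<exists>p q. Ap p q \<and> p \<noteq> y \<and> q \<noteq> y \<and> H y p = H y q"
          then obtain p q where pq: "Ap p q" "p \<noteq> y" "q \<noteq> y" by auto
          show ?thesis
          proof (cases "x = p \<or> x = q")
            case False
            then show ?thesis using core_alpha[OF xy pq(1)] pq(2,3) by auto
          next
            case True
            then show ?thesis using core_beta[OF pq(1) b(1)] `b = y` pq(2,3) by auto
          qed
        qed
      qed
    next
      assume "\<exists>p q. Ap p q \<and> p \<noteq> x \<and> q \<noteq> x \<and> H x p = H x q"
      then obtain p q where pq: "Ap p q" "p \<noteq> x" "q \<noteq> x" by auto
      note pqd = Ap_d[OF pq(1)]
      show ?thesis
      proof (cases "y = p \<or> y = q")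
        case False
        then show ?thesis using core_alpha[OF xy pq(1)] pq(2,3) by auto
      next
        case yin: True
        from S'[OF yd] show ?thesis
        proof
          assume "\<exists>b. Bv b \<and> b \<noteq> y \<and> H y v = H y b"
          then obtain b' where b': "Bv b'" "b' \<noteq> y" by auto
          show ?thesis
          proof (cases "b' = x")
            case True
            then show ?thesis using core_beta[OF pq(1) b'(1)] pq(2,3) by auto
          next
            case False
            then show ?thesis using core_beta[OF xy b'(1)] b'(2) by auto
          qed
        next
          assume "\<exists>p q. Ap p q \<and> p \<noteq> y \<and> q \<noteq> y \<and> H y p = H y q"
          then obtain p' q' where pq': "Ap p' q'" "p' \<noteq> y" "q' \<noteq> y" by auto
          note pqd' = Ap_d[OF pq'(1)]
          show ?thesis
          proof (cases "x = p' \<or> x = q'")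
            case False
            then show ?thesis using core_alpha[OF xy pq'(1)] pq'(2,3) by auto
          next
            case xin: True
            show ?thesis
            proof (cases "p = p' \<or> p = q' \<or> q = p' \<or> q = q'")
              case False
              then show ?thesis using core_alpha[OF pq(1) pq'(1)] by auto
            next
              case True
              then show ?thesis using xin yin xyd pqd pqd' pq pq' by auto
            qed
          qed
        qed
      qed
    qed
  qed
qed

end

lemma compl_props:
  assumes "simple_graph V E"
  shows "\<And>x y. compl_graph V E x y \<Longrightarrow> compl_graph V E y x"
    and "\<And>x y. compl_graph V E x y \<Longrightarrow> x \<in> V"
    and "\<And>x y. compl_graph V E x y \<Longrightarrow> y \<in> V"
    and "\<And>x y. x \<in> V \<Longrightarrow> y \<in> V \<Longrightarrow> x \<noteq> y \<Longrightarrow> E x y \<longleftrightarrow> \<not> compl_graph V E x y"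
    and "\<And>x y. E x y \<Longrightarrow> x \<in> V \<and> y \<in> V \<and> x \<noteq> y"
    and "\<And>x y. E x y \<Longrightarrow> E y x"
  using assms unfolding simple_graph_def compl_graph_def by metis+

lemma edge_count:
  assumes "simple_graph V E"
  shows "card (edge_set E) + card (edge_set (compl_graph V E)) = card V * (card V - 1) div 2"
proof -
  let ?H = "compl_graph V E"
  have fin: "finite V" using assms unfolding simple_graph_def by auto
  note cp = compl_props[OF assms]
  have un: "edge_set E \<union> edge_set ?H = {A. A \<subseteq> V \<and> card A = 2}"
  proof
    show "edge_set E \<union> edge_set ?H \<subseteq> {A. A \<subseteq> V \<and> card A = 2}"
      unfolding edge_set_def compl_graph_def using cp(5) by auto
    show "{A. A \<subseteq> V \<and> card A = 2} \<subseteq> edge_set E \<union> edge_set ?H"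
    proof
      fix A assume "A \<in> {A. A \<subseteq> V \<and> card A = 2}"
      then obtain a b where ab: "A = {a,b}" "a \<noteq> b" "a \<in> V" "b \<in> V" by (auto simp: card_2_iff)
      show "A \<in> edge_set E \<union> edge_set ?H"
        using cp(4)[OF ab(3,4,2)] ab(1) unfolding edge_set_def by blast
    qed
  qed
  have dis: "edge_set E \<inter> edge_set ?H = {}"
  proof (rule ccontr)
    assume "edge_set E \<inter> edge_set ?H \<noteq> {}"
    then obtain u v u' v' where "E u v" "?H u' v'" "{u,v} = {u',v'}" unfolding edge_set_def by blast
    thus False using cp(4,5,6) by (metis doubleton_eq_iff)
  qed
  have f1: "finite (edge_set E)" and f2: "finite (edge_set ?H)"
    using un fin by (metis (no_types, lifting) finite_Pow_iff finite_Un finite_subset mem_Collect_eq subsetI PowI)+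
  have "card (edge_set E) + card (edge_set ?H) = card {A. A \<subseteq> V \<and> card A = 2}"
    using card_Un_disjoint[OF f1 f2 dis] un by simp
  also have "\<dots> = card V choose 2" using n_subsets[OF fin] .
  finally show ?thesis by (simp add: choose_two)
qed

lemma walk1: "is_walk V E xs x y \<Longrightarrow> length xs = Suc 0 \<Longrightarrow> x = y"
  unfolding is_walk_def by (cases xs) auto

lemma walk2: assumes "is_walk V E xs x y" "length xs = Suc (Suc 0)" shows "E x y"
proof -
  obtain a b where ab: "xs = [a,b]" using assms(2) by (auto simp: length_Suc_conv)
  have "E (xs ! 0) (xs ! Suc 0)" using assms unfolding is_walk_def by auto
  thus ?thesis using assms(1) ab unfolding is_walk_def by auto
qed

locale dense =
  fixes V :: "'a set" and E :: "'a \<Rightarrow> 'a \<Rightarrow> bool"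
  assumes sg: "simple_graph V E" and n6: "card V \<ge> 6"
    and h4: "card (edge_set (compl_graph V E)) \<le> 4"
begin

abbreviation "H \<equiv> compl_graph V E"

lemmas cp = compl_props[OF sg]

lemma finV: "finite V" using sg unfolding simple_graph_def by auto

lemma finH: "finite (edge_set H)"
proof -
  have "edge_set H \<subseteq> Pow V" unfolding edge_set_def using cp(2,3) by blast
  thus ?thesis using finV by (meson finite_Pow_iff finite_subset)
qed

lemma common:
  assumes "H x y"
  shows "\<exists>z\<in>V. z \<noteq> x \<and> z \<noteq> y \<and> \<not> H x z \<and> \<not> H y z"
proof (rule ccontr)
  assume "\<not> ?thesis"
  hence all: "\<forall>z\<in>V-{x,y}. H x z \<or> H y z" by auto
  have xy: "x \<noteq> y" "x \<in> V" "y \<in> V" using assms unfolding compl_graph_def by auto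
  define phi where "phi z = (if H x z then {x,z} else {y,z})" for z
  have inj: "inj_on phi (V-{x,y})"
  proof
    fix z1 z2 assume "z1 \<in> V-{x,y}" "z2 \<in> V-{x,y}" "phi z1 = phi z2"
    thus "z1 = z2" unfolding phi_def using xy by (auto split: if_splits simp: doubleton_eq_iff)
  qed
  have sub: "phi ` (V-{x,y}) \<subseteq> edge_set H - {{x,y}}"
  proof
    fix e assume "e \<in> phi ` (V-{x,y})"
    then obtain z where z: "z \<in> V-{x,y}" "e = phi z" by auto
    show "e \<in> edge_set H - {{x,y}}"
      using all z xy unfolding phi_def edge_set_def by (auto simp: doubleton_eq_iff)
  qed
  have "card (V-{x,y}) \<le> card (edge_set H - {{x,y}})"
    using card_inj_on_le[OF inj sub] finH by auto
  moreover have "{x,y} \<in> edge_set H" using assms unfolding edge_set_def by auto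
  hence "card (edge_set H - {{x,y}}) = card (edge_set H) - 1" using finH by simp
  moreover have "card (V-{x,y}) = card V - 2" using xy finV by (simp add: card_Diff_subset)
  ultimately show False using h4 n6 by linarith
qed

lemma dist_formula:
  assumes "x \<in> V" "y \<in> V"
  shows "dist V E x y = (if x = y then 0 else if H x y then 2 else 1)"
proof -
  let ?P = "\<lambda>k. \<exists>xs. is_walk V E xs x y \<and> length xs = Suc k"
  show ?thesis
  proof (cases "x = y")
    case True
    have "?P 0" using True assms by (intro exI[of _ "[x]"]) (auto simp: is_walk_def)
    hence "(LEAST k. ?P k) = 0" by (rule Least_eq_0)
    thus ?thesis using True unfolding dist_def by simp
  next
    case xy: False
    have n0: "\<not> ?P 0" using walk1 xy by fastforce
    show ?thesis
    proof (cases "H x y")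
      case False
      hence Exy: "E x y" using cp(4)[OF assms xy] by simp
      have "?P 1" using Exy assms
        by (intro exI[of _ "[x,y]"]) (auto simp: is_walk_def less_Suc_eq)
      have "(LEAST k. ?P k) = 1"
      proof (rule Least_equality)
        show "?P 1" by fact
        show "\<And>k. ?P k \<Longrightarrow> 1 \<le> k" using n0 by (metis One_nat_def less_one not_le)
      qed
      thus ?thesis using xy False unfolding dist_def by simp
    next
      case True
      obtain z where z: "z \<in> V" "z \<noteq> x" "z \<noteq> y" "\<not> H x z" "\<not> H y z" using common[OF True] by auto
      have Exz: "E x z" using cp(4)[OF assms(1) z(1) z(2)[symmetric]] z(4) by simp
      have Ezy: "E z y" using cp(4)[OF z(1) assms(2) z(3)] z(5) cp(1) by blast
      have "?P 2" using Exz Ezy assms z(1)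
        by (intro exI[of _ "[x,z,y]"]) (auto simp: is_walk_def less_Suc_eq nth_Cons split: nat.splits)
      have n1: "\<not> ?P 1" using walk2 True cp(4)[OF assms xy] by fastforce
      have "(LEAST k. ?P k) = 2"
      proof (rule Least_equality)
        show "?P 2" by fact
        show "\<And>k. ?P k \<Longrightarrow> 2 \<le> k" using n0 n1 by (metis One_nat_def less_2_cases not_le)
      qed
      thus ?thesis using xy True unfolding dist_def by simp
    qed
  qed
qed

lemma resolving_iff:
  "resolving_set V E R \<longleftrightarrow> R \<subseteq> V \<and> (\<forall>x\<in>V. \<forall>y\<in>V. x \<noteq> y \<longrightarrow> sep H R x y)"
proof -
  have key: "\<And>r x y. r \<in> V \<Longrightarrow> x \<in> V \<Longrightarrow> y \<in> V \<Longrightarrow> x \<noteq> y \<Longrightarrow>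
      (dist V E r x \<noteq> dist V E r y) \<longleftrightarrow> (r = x \<or> r = y \<or> H r x \<noteq> H r y)"
    using dist_formula by auto
  show ?thesis unfolding resolving_set_def sep_def
  proof (intro iffI conjI ballI impI)
    fix x y assume a: "R \<subseteq> V \<and> (\<forall>x\<in>V. \<forall>y\<in>V. x \<noteq> y \<longrightarrow> (\<exists>r\<in>R. dist V E r x \<noteq> dist V E r y))"
      "x \<in> V" "y \<in> V" "x \<noteq> y"
    then obtain r where "r \<in> R" "dist V E r x \<noteq> dist V E r y" by blast
    thus "\<exists>r\<in>R. r = x \<or> r = y \<or> H r x \<noteq> H r y" using key[of r x y] a by blast
  next
    fix x y assume a: "R \<subseteq> V \<and> (\<forall>x\<in>V. \<forall>y\<in>V. x \<noteq> y \<longrightarrow> (\<exists>r\<in>R. r = x \<or> r = y \<or> H r x \<noteq> H r y))"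
      "x \<in> V" "y \<in> V" "x \<noteq> y"
    then obtain r where "r \<in> R" "r = x \<or> r = y \<or> H r x \<noteq> H r y" by blast
    thus "\<exists>r\<in>R. dist V E r x \<noteq> dist V E r y" using key[of r x y] a by blast
  qed auto
qed

lemma res_V: "resolving_set V E V"
  unfolding resolving_iff sep_def by auto

lemma basis_ex: "\<exists>R. metric_basis V E R"
proof -
  have "\<exists>k R. resolving_set V E R \<and> card R = k" using res_V by blast
  hence "\<exists>R. resolving_set V E R \<and> card R = metric_dim V E"
    unfolding metric_dim_def by (rule LeastI_ex)
  thus ?thesis unfolding metric_basis_def by blast
qed

lemma dim_le: "resolving_set V E R \<Longrightarrow> metric_dim V E \<le> card R"
  unfolding metric_dim_def by (rule Least_le) blast

lemma forced_P5:
  assumes "basis_forced V E v"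
  shows "P5v H v"
proof -
  obtain R where R: "metric_basis V E R" using basis_ex by blast
  have vR: "v \<in> R" using assms R unfolding basis_forced_def by auto
  have resR: "resolving_set V E R" and cR: "card R = metric_dim V E" using R unfolding metric_basis_def by auto
  have RV: "R \<subseteq> V" using resR resolving_iff by auto
  have finR: "finite R" using RV finV finite_subset by auto
  have sepR: "\<And>x y. x \<in> V \<Longrightarrow> y \<in> V \<Longrightarrow> x \<noteq> y \<Longrightarrow> sep H R x y" using resR resolving_iff by auto
  have cRv: "card (R - {v}) = card R - 1" using finR vR by simp
  have cR1: "card R \<ge> 1" using finR vR by (metis One_nat_def Suc_leI card_gt_0_iff empty_iff)
  have Mex: "\<exists>x y. wit V H R v x y"
  proof (rule ccontr)
    assume "\<not> ?thesis"
    hence "resolving_set V E (R - {v})" unfolding resolving_iff sep_def wit_def using RV by blast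
    hence "metric_dim V E \<le> card (R - {v})" by (rule dim_le)
    thus False using cR cRv cR1 by linarith
  qed
  have Swap: "\<exists>x y. wit V H R v x y \<and> x \<noteq> u \<and> y \<noteq> u \<and> H u x = H u y" if u: "u \<in> V" "u \<notin> R" for u
  proof (rule ccontr)
    assume a: "\<not> ?thesis"
    have "resolving_set V E (insert u (R - {v}))"
      unfolding resolving_iff
    proof (intro conjI ballI impI)
      show "insert u (R - {v}) \<subseteq> V" using RV u by auto
      fix x y assume xy: "x \<in> V" "y \<in> V" "x \<noteq> y"
      show "sep H (insert u (R - {v})) x y"
      proof (cases "wit V H R v x y")
        case True
        thus ?thesis using a unfolding sep_def by blast
      next
        case False
        thus ?thesis using xy unfolding sep_def wit_def by blast
      qed
    qed
    moreover have "card (insert u (R - {v})) = card R" using cRv cR1 u finR by simp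
    ultimately have "metric_basis V E (insert u (R - {v}))" using cR unfolding metric_basis_def by simp
    hence "v \<in> insert u (R - {v})" using assms unfolding basis_forced_def by blast
    thus False using u vR by auto
  qed
  interpret c: conf V H R v
  proof
    show "finite V" by (rule finV)
    show "\<And>x y. H x y \<Longrightarrow> H y x" using cp(1) by blast
    show "\<And>x y. H x y \<Longrightarrow> x \<in> V" using cp(2) by blast
    show "card (edge_set H) \<le> 4" by (rule h4)
  qed (use RV vR sepR Mex Swap in auto)
  show ?thesis by (rule c.main_local)
qed

lemma auto_forced:
  assumes sV: "\<forall>p\<in>V. \<sigma> p \<in> V" and inv: "\<forall>p\<in>V. \<sigma> (\<sigma> p) = p"
    and sH: "\<forall>p\<in>V. \<forall>q\<in>V. H (\<sigma> p) (\<sigma> q) = H p q"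
    and f: "basis_forced V E x"
  shows "basis_forced V E (\<sigma> x)"
  unfolding basis_forced_def
proof (intro conjI allI impI)
  have xV: "x \<in> V" using f unfolding basis_forced_def by auto
  thus "\<sigma> x \<in> V" using sV by auto
  fix R assume R: "metric_basis V E R"
  have resR: "resolving_set V E R" and cR: "card R = metric_dim V E" using R unfolding metric_basis_def by auto
  have RV: "R \<subseteq> V" using resR resolving_iff by auto
  have invR: "\<And>r. r \<in> R \<Longrightarrow> \<sigma> (\<sigma> r) = r" using inv RV by blast
  have injR: "inj_on \<sigma> R"
  proof (rule inj_onI)
    fix r1 r2 assume "r1 \<in> R" "r2 \<in> R" "\<sigma> r1 = \<sigma> r2"
    thus "r1 = r2" using invR by metis
  qed
  have "resolving_set V E (\<sigma> ` R)"
    unfolding resolving_iff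
  proof (intro conjI ballI impI)
    show "\<sigma> ` R \<subseteq> V" using RV sV by auto
    fix p q assume pq: "p \<in> V" "q \<in> V" "p \<noteq> q"
    have ip: "\<sigma> (\<sigma> p) = p" and iq: "\<sigma> (\<sigma> q) = q" using inv pq by auto
    have sp: "\<sigma> p \<in> V" and sq: "\<sigma> q \<in> V" using sV pq by auto
    have "\<sigma> p \<noteq> \<sigma> q" using pq(3) ip iq by metis
    hence "sep H R (\<sigma> p) (\<sigma> q)" using resR resolving_iff sp sq by auto
    then obtain r where r: "r \<in> R" "r = \<sigma> p \<or> r = \<sigma> q \<or> H r (\<sigma> p) \<noteq> H r (\<sigma> q)" unfolding sep_def by blast
    have rV: "r \<in> V" using r RV by auto
    have h1: "H (\<sigma> r) (\<sigma> (\<sigma> p)) = H r (\<sigma> p)" using sH rV sp by blast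
    have h2: "H (\<sigma> r) (\<sigma> (\<sigma> q)) = H r (\<sigma> q)" using sH rV sq by blast
    have "\<sigma> r = p \<or> \<sigma> r = q \<or> H (\<sigma> r) p \<noteq> H (\<sigma> r) q"
      using r(2) h1 h2 ip iq by auto
    thus "sep H (\<sigma> ` R) p q" unfolding sep_def using r(1) by blast
  qed
  moreover have "card (\<sigma> ` R) = card R" using card_image[OF injR] .
  ultimately have "metric_basis V E (\<sigma> ` R)" using cR unfolding metric_basis_def by simp
  hence "x \<in> \<sigma> ` R" using f unfolding basis_forced_def by blast
  then obtain r where "r \<in> R" "x = \<sigma> r" by auto
  thus "\<sigma> x \<in> R" using invR by auto
qed

lemma iso_part:
  assumes dis: "distinct [a,b,c,d,e]" and E1: "H a b" "H b c" "H c d" "H d e"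
    and c4: "card (edge_set H) = 4"
  shows "\<exists>f. bij_betw f V {0..<card V} \<and> (\<forall>p\<in>V. \<forall>q\<in>V. H p q \<longleftrightarrow> P5_plus_isolated (f p) (f q))
     \<and> f a = 0 \<and> f b = 1 \<and> f c = 2 \<and> f d = 3 \<and> f e = 4"
proof -
  let ?P = "{a,b,c,d,e}"
  let ?Es = "{{a,b},{b,c},{c,d},{d,e}}"
  have neq: "a \<noteq> b" "a \<noteq> c" "a \<noteq> d" "a \<noteq> e" "b \<noteq> a" "b \<noteq> c" "b \<noteq> d" "b \<noteq> e" "c \<noteq> a" "c \<noteq> b" "c \<noteq> d" "c \<noteq> e" "d \<noteq> a" "d \<noteq> b" "d \<noteq> c" "d \<noteq> e" "e \<noteq> a" "e \<noteq> b" "e \<noteq> c" "e \<noteq> d" using dis by auto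
  have E2: "H b a" "H c b" "H d c" "H e d" using E1 cp(1) by blast+
  have PV: "?P \<subseteq> V" using E1 cp(2,3) by blast
  have cP: "card ?P = 5" using dis by simp
  have cEs: "card ?Es = 4" using neq by (auto simp: doubleton_eq_iff card_insert_if)
  have sub: "?Es \<subseteq> edge_set H" using E1 unfolding edge_set_def by blast
  have EsEq: "?Es = edge_set H" using card_seteq[OF finH sub] c4 cEs by simp
  have Hiff: "\<And>p q. H p q \<longleftrightarrow> {p,q} \<in> ?Es"
  proof
    fix p q assume "H p q"
    hence "{p,q} \<in> edge_set H" unfolding edge_set_def by blast
    thus "{p,q} \<in> ?Es" unfolding EsEq .
  next
    fix p q assume "{p,q} \<in> ?Es"
    thus "H p q" using E1 E2 by (auto simp: doubleton_eq_iff)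
  qed
  let ?n = "card V"
  have cVP: "card (V - ?P) = ?n - 5" using PV cP finV by (simp add: card_Diff_subset)
  obtain g where g: "bij_betw g (V - ?P) {5..<?n}"
    using finite_same_card_bij[of "V - ?P" "{5..<?n}"] finV cVP by auto
  define f where "f p = (if p = a then 0 else if p = b then 1 else if p = c then 2 else if p = d then 3
     else if p = e then 4 else g p)" for p
  have fP: "f a = 0" "f b = 1" "f c = 2" "f d = 3" "f e = 4" using neq unfolding f_def by auto
  have fg: "\<And>p. p \<notin> ?P \<Longrightarrow> f p = g p" unfolding f_def by auto
  have b1: "bij_betw f ?P {0..<5}"
  proof -
    have "inj_on f ?P" using fP neq unfolding inj_on_def by auto
    moreover have "f ` ?P = {0..<5}"
    proof -
      have "{0..<5::nat} = {0,1,2,3,4}" by auto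
      thus ?thesis using fP by auto
    qed
    ultimately show ?thesis unfolding bij_betw_def by simp
  qed
  have b2: "bij_betw f (V - ?P) {5..<?n}"
    using bij_betw_cong[of "V - ?P" f g] g fg by auto
  have "bij_betw f (?P \<union> (V - ?P)) ({0..<5} \<union> {5..<?n})"
    by (rule bij_betw_combine[OF b1 b2]) auto
  moreover have "?P \<union> (V - ?P) = V" using PV by auto
  moreover have "{0..<5} \<union> {5..<?n} = {0..<?n}" using n6 by auto
  ultimately have bij: "bij_betw f V {0..<?n}" by simp
  have big: "\<And>p. p \<in> V \<Longrightarrow> p \<notin> ?P \<Longrightarrow> f p \<ge> 5"
  proof -
    fix p assume "p \<in> V" "p \<notin> ?P"
    hence "g p \<in> {5..<?n}" using g unfolding bij_betw_def by blast
    thus "f p \<ge> 5" using fg[OF `p \<notin> ?P`] by simp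
  qed
  have edges: "\<forall>p\<in>V. \<forall>q\<in>V. H p q \<longleftrightarrow> P5_plus_isolated (f p) (f q)"
  proof (intro ballI)
    fix p q assume pq: "p \<in> V" "q \<in> V"
    show "H p q \<longleftrightarrow> P5_plus_isolated (f p) (f q)"
    proof (cases "p \<in> ?P \<and> q \<in> ?P")
      case True
      hence "(p = a \<or> p = b \<or> p = c \<or> p = d \<or> p = e) \<and> (q = a \<or> q = b \<or> q = c \<or> q = d \<or> q = e)" by blast
      then show ?thesis unfolding Hiff
        by (elim conjE disjE) (simp_all add: neq fP doubleton_eq_iff P5_plus_isolated_def)
    next
      case False
      hence "\<not> H p q" unfolding Hiff by (auto simp: doubleton_eq_iff)
      moreover have "\<not> P5_plus_isolated (f p) (f q)"
      proof (cases "p \<in> ?P")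
        case True
        hence "q \<notin> ?P" using False by blast
        hence "f q \<ge> 5" using big pq by blast
        thus ?thesis unfolding P5_plus_isolated_def by linarith
      next
        case False
        hence "f p \<ge> 5" using big pq by blast
        thus ?thesis unfolding P5_plus_isolated_def by linarith
      qed
      ultimately show ?thesis by simp
    qed
  qed
  show ?thesis using bij edges fP by blast
qed

end


lemma path_arith:
  assumes "P5_plus_isolated i0 i1" "P5_plus_isolated i1 i2" "P5_plus_isolated i2 i3" "P5_plus_isolated i3 i4"
    and "distinct [i0,i1,i2,i3,i4]"
  shows "i1 = 1 \<or> i1 = 3"
  using assms unfolding P5_plus_isolated_def by auto

definition tau :: "nat \<Rightarrow> nat" where "tau i = (if i < 5 then 4 - i else i)"

lemma tau_P5: "P5_plus_isolated (tau i) (tau j) = P5_plus_isolated i j"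
  unfolding P5_plus_isolated_def tau_def by auto

theorem theorem7:
  fixes V :: "'a set" and E :: "'a \<Rightarrow> 'a \<Rightarrow> bool"
  assumes "simple_graph V E" and "connected_graph V E"
    and "card V \<ge> 6"
    and "\<exists>v. basis_forced V E v"
  shows "card (edge_set E) \<le> card V * (card V - 1) div 2 - 4
    \<and> (card (edge_set E) = card V * (card V - 1) div 2 - 4 \<longrightarrow>
         graph_iso V (compl_graph V E) {0..<card V} P5_plus_isolated
         \<and> card {v. basis_forced V E v} = 2)"
proof -
  let ?n = "card V"
  let ?H = "compl_graph V E"
  let ?C = "card V * (card V - 1) div 2"
  have sg: "simple_graph V E" by fact
  have cnt: "card (edge_set E) + card (edge_set ?H) = ?C" by (rule edge_count[OF sg])
  obtain v0 where v0: "basis_forced V E v0" using assms(4) by blast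
  have H4: "card (edge_set ?H) \<ge> 4"
  proof (rule ccontr)
    assume "\<not> ?thesis"
    hence le: "card (edge_set ?H) \<le> 4" by simp
    interpret dense V E using sg assms(3) le by unfold_locales
    have "P5v ?H v0" by (rule forced_P5[OF v0])
    then obtain a c d e where p: "distinct [a,v0,c,d,e]" "?H a v0" "?H v0 c" "?H c d" "?H d e"
      unfolding P5v_def by blast
    have "card {{a,v0},{v0,c},{c,d},{d,e}} = 4" using p(1) by (auto simp: doubleton_eq_iff card_insert_if)
    moreover have "{{a,v0},{v0,c},{c,d},{d,e}} \<subseteq> edge_set ?H" using p unfolding edge_set_def by blast
    ultimately have "4 \<le> card (edge_set ?H)" using card_mono[OF finH] by metis
    thus False using `\<not> 4 \<le> card (edge_set ?H)` by simp
  qed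
  have C15: "?C \<ge> 15"
  proof -
    have "?n * (?n - 1) \<ge> 6 * 5" using assms(3) by (intro mult_le_mono) auto
    thus ?thesis by linarith
  qed
  show ?thesis
  proof (intro conjI impI)
    show "card (edge_set E) \<le> ?C - 4" using cnt H4 by arith
    assume eq: "card (edge_set E) = ?C - 4"
    have c4: "card (edge_set ?H) = 4" using cnt eq C15 by arith
    have le4: "card (edge_set ?H) \<le> 4" using c4 by simp
    interpret dense V E using sg assms(3) le4 by unfold_locales
    have "P5v ?H v0" by (rule forced_P5[OF v0])
    then obtain a c d e where p: "distinct [a,v0,c,d,e]" "?H a v0" "?H v0 c" "?H c d" "?H d e"
      unfolding P5v_def by blast
    obtain f where f: "bij_betw f V {0..<?n}" "\<forall>p\<in>V. \<forall>q\<in>V. ?H p q \<longleftrightarrow> P5_plus_isolated (f p) (f q)"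
      "f a = 0" "f v0 = 1" "f c = 2" "f d = 3" "f e = 4"
      using iso_part[OF p c4] by blast
    show "graph_iso V ?H {0..<?n} P5_plus_isolated" unfolding graph_iso_def using f(1,2) by blast
    have injf: "inj_on f V" using f(1) unfolding bij_betw_def by auto
    have PV: "a \<in> V" "v0 \<in> V" "c \<in> V" "d \<in> V" "e \<in> V" using p cp(2,3) by blast+
    have dv: "d \<noteq> v0" using p(1) by auto
    have "{x. basis_forced V E x} = {v0, d}"
    proof
      show "{x. basis_forced V E x} \<subseteq> {v0, d}"
      proof
        fix x assume "x \<in> {x. basis_forced V E x}"
        hence "P5v ?H x" using forced_P5 by blast
        then obtain a' c' d' e' where q: "distinct [a',x,c',d',e']" "?H a' x" "?H x c'" "?H c' d'" "?H d' e'"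
          unfolding P5v_def by blast
        have qV: "a' \<in> V" "x \<in> V" "c' \<in> V" "d' \<in> V" "e' \<in> V" using q cp(2,3) by blast+
        have "distinct [f a', f x, f c', f d', f e']"
          using q(1) qV injf unfolding inj_on_def by auto
        moreover have "P5_plus_isolated (f a') (f x)" "P5_plus_isolated (f x) (f c')"
          "P5_plus_isolated (f c') (f d')" "P5_plus_isolated (f d') (f e')"
          using f(2) q qV by blast+
        ultimately have "f x = 1 \<or> f x = 3" using path_arith by blast
        hence "f x = f v0 \<or> f x = f d" using f by auto
        thus "x \<in> {v0, d}" using injf qV(2) PV unfolding inj_on_def by blast
      qed
    next
      define \<sigma> where "\<sigma> x = (if x = a then e else if x = e then a else if x = v0 then d else if x = d then v0 else x)" for x
      have sV: "\<forall>p\<in>V. \<sigma> p \<in> V" using PV unfolding \<sigma>_def by auto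
      have inv: "\<forall>p\<in>V. \<sigma> (\<sigma> p) = p" using p(1) unfolding \<sigma>_def by auto
      have fs: "f (\<sigma> p) = tau (f p)" if pV: "p \<in> V" for p
      proof (cases "p \<in> {a,v0,c,d,e}")
        case True
        then show ?thesis using p(1) f(3-7) unfolding \<sigma>_def tau_def by auto
      next
        case False
        have "f p \<ge> 5"
        proof (rule ccontr)
          assume "\<not> 5 \<le> f p"
          hence "f p = f a \<or> f p = f v0 \<or> f p = f c \<or> f p = f d \<or> f p = f e" using f(3-7) by auto
          hence "p \<in> {a,v0,c,d,e}" using injf pV PV unfolding inj_on_def by blast
          thus False using False by blast
        qed
        moreover have "\<sigma> p = p" using False unfolding \<sigma>_def by auto
        ultimately show ?thesis unfolding tau_def by simp
      qed
      have sH: "\<forall>p\<in>V. \<forall>q\<in>V. ?H (\<sigma> p) (\<sigma> q) = ?H p q"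
      proof (intro ballI)
        fix p q assume pq: "p \<in> V" "q \<in> V"
        have "?H (\<sigma> p) (\<sigma> q) = P5_plus_isolated (f (\<sigma> p)) (f (\<sigma> q))" using f(2) sV pq by blast
        also have "\<dots> = P5_plus_isolated (f p) (f q)" using fs pq tau_P5 by simp
        also have "\<dots> = ?H p q" using f(2) pq by blast
        finally show "?H (\<sigma> p) (\<sigma> q) = ?H p q" .
      qed
      have "basis_forced V E (\<sigma> v0)" by (rule auto_forced[OF sV inv sH v0])
      moreover have "\<sigma> v0 = d" using p(1) unfolding \<sigma>_def by auto
      ultimately show "{v0, d} \<subseteq> {x. basis_forced V E x}" using v0 by auto
    qed
    thus "card {v. basis_forced V E v} = 2" using dv by simp
  qed
qed

end
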